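(* For a plane binary tree $t$ with $k$ nodes, let $S_t(z)$ be the exponential generating function of plane increasing binary trees having no fringe subtree of shape $t$, and let $\tilde\rho$ be its dominant singularity. Then for every $\delta>0$ the following holds: if $k$ is sufficiently large, then $S_t(z)$ has no singularity in the domain \[ \tilde\rho < |z| < 1 + \frac{(2-\delta)\ln k}{k}. \]
   Context: A plane binary tree is a rooted tree in which each node has a left and a right slot, each empty or holding a subtree. A plane increasing binary tree of size $n$ is such a tree whose $n$ nodes are labeled $1,\dots,n$ increasingly along every path from the root. A fringe subtree is a node with all its descendants; its shape is obtained by forgetting labels. For $t$ with $k$ nodes, $w(t)=\ell(t)/k!$ where $\ell(t)$ is the number of increasing labelings of $t$. $S_t$ is the power series solution of $S_t'=(1+S_t)^2-w(t)kz^{k-1}$, $S_t(0)=0$; one has $S_t=-u'/u$ with $u$ the entire solution of $u''-2u'+(1-w(t)kz^{k-1})u=0$, $u(0)=-1$, $u'(0)=0$, and $\tilde\rho>1$ is the smallest positive zero of $u$. *)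

theory Defs
  imports "HOL-Complex_Analysis.Complex_Analysis"
begin

datatype ptree = Leaf | Node ptree ptree

fun nodes :: "ptree \<Rightarrow> nat" where
  "nodes Leaf = 0"
| "nodes (Node l r) = nodes l + nodes r + 1"

fun positions :: "ptree \<Rightarrow> bool list set" where
  "positions Leaf = {}"
| "positions (Node l r) =
     insert [] ((\<lambda>p. False # p) ` positions l \<union> (\<lambda>p. True # p) ` positions r)"

definition incr_labelings :: "ptree \<Rightarrow> (bool list \<Rightarrow> nat) set" where
  "incr_labelings t = {f. bij_betw f (positions t) {1..nodes t}
      \<and> (\<forall>p. p \<notin> positions t \<longrightarrow> f p = 0)
      \<and> (\<forall>p b. p @ [b] \<in> positions t \<longrightarrow> f p < f (p @ [b]))}"

definition ell :: "ptree \<Rightarrow> nat" where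
  "ell t = card (incr_labelings t)"

definition wt :: "ptree \<Rightarrow> real" where
  "wt t = real (ell t) / fact (nodes t)"

definition u_sol :: "ptree \<Rightarrow> complex \<Rightarrow> complex" where
  "u_sol t = (THE u. u holomorphic_on UNIV \<and> u 0 = -1 \<and> deriv u 0 = 0 \<and>
      (\<forall>z. deriv (deriv u) z - 2 * deriv u z
            + (1 - of_real (wt t) * of_nat (nodes t) * z ^ (nodes t - 1)) * u z = 0))"

text \<open>S_t = -u'/u (meromorphic continuation of the EGF of increasing trees
  avoiding fringe subtree shape t).\<close>
definition S_fun :: "ptree \<Rightarrow> complex \<Rightarrow> complex" where
  "S_fun t z = - deriv (u_sol t) z / u_sol t z"

definition rho_tilde :: "ptree \<Rightarrow> real" where
  "rho_tilde t = Inf {x::real. 0 < x \<and> u_sol t (of_real x) = 0}"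

end

theory Submission
  imports Defs "HOL-Combinatorics.Multiset_Permutations"
begin


fun bc :: "real \<Rightarrow> nat \<Rightarrow> nat \<Rightarrow> real" where
  "bc a k 0 = -1"
| "bc a k (Suc 0) = 1"
| "bc a k (Suc (Suc n)) = (if k \<le> Suc n then a * bc a k (Suc n - k) / (real (n+2) * real (n+1)) else 0)"

lemma bc_bound:
  assumes r: "r > 0"
  shows "\<exists>C. \<forall>n. \<bar>bc a k n\<bar> * r^n \<le> C"
proof -
  define N where "N = nat \<lceil>\<bar>a\<bar> * r^(k+1)\<rceil>"
  define C where "C = Max ((\<lambda>n. \<bar>bc a k n\<bar> * r^n) ` {..N+1})"
  have le: "\<bar>bc a k n\<bar> * r^n \<le> C" if "n \<le> N+1" for n
    unfolding C_def by (rule Max_ge) (use that in auto)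
  have "\<bar>bc a k n\<bar> * r^n \<le> C" for n
  proof (induction n rule: less_induct)
    case (less n)
    show ?case
    proof (cases "n \<le> N+1")
      case True then show ?thesis by (rule le)
    next
      case False
      define m where "m = n - 2"
      have m: "n = Suc (Suc m)" and mN: "m \<ge> N" using False unfolding m_def by arith+
      show ?thesis
      proof (cases "k \<le> Suc m")
        case False then show ?thesis using m le[of 0] by simp
      next
        case True
        have IH: "\<bar>bc a k (Suc m - k)\<bar> * r^(Suc m - k) \<le> C"
          using less.IH m by simp
        have pos: "real (m+2) * real (m+1) > 0" by simp
        have Nb: "\<bar>a\<bar> * r^(k+1) \<le> real N" unfolding N_def by linarith
        have "\<bar>a\<bar> * r^(k+1) \<le> real (m+2) * real (m+1)"
        proof -
          have "m \<le> (m+2)*(m+1)" by (simp add: algebra_simps)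
          then have "N \<le> (m+2)*(m+1)" using mN by linarith
          then have "real N \<le> real ((m+2)*(m+1))" by (rule of_nat_mono)
          then have "real N \<le> real (m+2) * real (m+1)" by (simp add: algebra_simps)
          then show ?thesis using Nb by linarith
        qed
        then have q: "\<bar>a\<bar> * r^(k+1) / (real (m+2) * real (m+1)) \<le> 1" using pos by simp
        have rr: "r^n = r^(k+1) * r^(Suc m - k)" using True m by (simp flip: power_add)
        define D where "D = real (m+2) * real (m+1)"
        define B where "B = \<bar>bc a k (Suc m - k)\<bar>"
        have "\<bar>bc a k n\<bar> = \<bar>a\<bar> * B / D"
          using True m pos unfolding D_def B_def by (simp add: abs_mult abs_divide)
        then have "\<bar>bc a k n\<bar> * r^n = \<bar>a\<bar> * B / D * (r^(k+1) * r^(Suc m - k))"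
          using rr by simp
        also have "\<dots> = (\<bar>a\<bar> * r^(k+1) / D) * (B * r^(Suc m - k))"
          using pos unfolding D_def by (simp add: field_simps)
        finally have "\<bar>bc a k n\<bar> * r^n = (\<bar>a\<bar> * r^(k+1) / (real (m+2) * real (m+1))) * (\<bar>bc a k (Suc m - k)\<bar> * r^(Suc m - k))"
          unfolding D_def B_def .
        also have "\<dots> \<le> 1 * C"
          using IH q r by (intro mult_mono) auto
        finally show ?thesis by simp
      qed
    qed
  qed
  then show ?thesis by blast
qed


lemma bc_summable:
  assumes "r \<ge> 0"
  shows "summable (\<lambda>n. \<bar>bc a k n\<bar> * r^n)"
proof -
  obtain C where C: "\<And>n. \<bar>bc a k n\<bar> * (2*(r+1))^n \<le> C"
    using bc_bound[of "2*(r+1)" a k] assms by auto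
  have bnd: "\<bar>bc a k n\<bar> * r^n \<le> C * (1/2)^n" for n
  proof -
    have "\<bar>bc a k n\<bar> * r^n \<le> \<bar>bc a k n\<bar> * (r+1)^n"
      using assms by (intro mult_left_mono power_mono) auto
    also have "\<dots> = \<bar>bc a k n\<bar> * (2*(r+1))^n * (1/2)^n"
    proof -
      have "(2*(r+1))^n * (1/2)^n = (2*(r+1)*(1/2))^n" by (simp only: power_mult_distrib)
      also have "2*(r+1)*(1/2) = r+1" by simp
      finally have "(2*(r+1))^n * (1/2)^n = (r+1)^n" .
      then show ?thesis by (simp add: mult.assoc)
    qed
    also have "\<dots> \<le> C * (1/2)^n" using C[of n] by (intro mult_right_mono) auto
    finally show ?thesis .
  qed
  show ?thesis
  proof (rule summable_comparison_test'[where N=0])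
    show "summable (\<lambda>n. C * (1/2::real)^n)"
      by (intro summable_mult summable_geometric) auto
    fix n show "norm (\<bar>bc a k n\<bar> * r^n) \<le> C * (1/2)^n" using bnd[of n] assms by simp
  qed
qed

definition cc :: "real \<Rightarrow> nat \<Rightarrow> nat \<Rightarrow> complex" where
  "cc a k n = complex_of_real (bc a k n)"

lemma cc_summable: "summable (\<lambda>n. cc a k n * z^n)"
proof (rule summable_norm_cancel)
  show "summable (\<lambda>n. norm (cc a k n * z^n))"
    using bc_summable[of "norm z" a k] by (simp add: cc_def norm_mult norm_power)
qed

definition vf :: "real \<Rightarrow> nat \<Rightarrow> complex \<Rightarrow> complex" where
  "vf a k z = (\<Sum>n. cc a k n * z^n)"
definition vf1 :: "real \<Rightarrow> nat \<Rightarrow> complex \<Rightarrow> complex" where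
  "vf1 a k z = (\<Sum>n. diffs (cc a k) n * z^n)"
definition vf2 :: "real \<Rightarrow> nat \<Rightarrow> complex \<Rightarrow> complex" where
  "vf2 a k z = (\<Sum>n. diffs (diffs (cc a k)) n * z^n)"

lemma cc_diffs_summable: "summable (\<lambda>n. diffs (cc a k) n * z^n)"
  by (rule termdiff_converges_all) (rule cc_summable)

lemma vf_deriv: "(vf a k has_field_derivative vf1 a k z) (at z)"
  unfolding vf_def[abs_def] vf1_def
  by (rule termdiffs_strong_converges_everywhere) (rule cc_summable)

lemma vf1_deriv: "(vf1 a k has_field_derivative vf2 a k z) (at z)"
  unfolding vf1_def[abs_def] vf2_def
  by (rule termdiffs_strong_converges_everywhere) (rule cc_diffs_summable)

lemma mdaux: "p \<noteq> 0 \<Longrightarrow> q \<noteq> 0 \<Longrightarrow> p * (q * (x / (q * p))) = (x::real)"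
  by (simp add: field_simps)

lemma vf2_eq:
  assumes k: "k \<ge> 1"
  shows "vf2 a k z = of_real a * z^(k-1) * vf a k z"
proof -
  define d where "d n = (if k - 1 \<le> n then of_real a * cc a k (n - (k-1)) else 0)" for n
  have dd: "diffs (diffs (cc a k)) n = d n" for n
  proof -
    have "diffs (diffs (cc a k)) n = of_real (real (Suc n) * (real (Suc (Suc n)) * bc a k (Suc (Suc n))))"
      by (simp add: diffs_def cc_def)
    also have "real (Suc n) * (real (Suc (Suc n)) * bc a k (Suc (Suc n))) = (if k \<le> Suc n then a * bc a k (Suc n - k) else 0)"
      using mdaux[of "real (Suc n)" "real (Suc (Suc n))" "a * bc a k (Suc n - k)"] by simp
    also have "of_real \<dots> = d n"
      using k by (auto simp: d_def cc_def Suc_diff_le)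
    finally show ?thesis .
  qed
  have "(\<lambda>i. d (i + (k-1)) * z^(i + (k-1))) sums (of_real a * z^(k-1) * vf a k z)"
  proof -
    have "(\<lambda>i. (of_real a * z^(k-1)) * (cc a k i * z^i)) sums (of_real a * z^(k-1) * vf a k z)"
      unfolding vf_def by (intro sums_mult summable_sums cc_summable)
    moreover have "d (i + (k-1)) * z^(i + (k-1)) = (of_real a * z^(k-1)) * (cc a k i * z^i)" for i
      by (simp add: d_def power_add)
    ultimately show ?thesis by simp
  qed
  then have "(\<lambda>n. d n * z^n) sums (of_real a * z^(k-1) * vf a k z + (\<Sum>i<k-1. d i * z^i))"
    by (subst (asm) sums_iff_shift)
  moreover have "(\<Sum>i<k-1. d i * z^i) = 0" by (simp add: d_def)
  ultimately have "(\<lambda>n. d n * z^n) sums (of_real a * z^(k-1) * vf a k z)" by simp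
  then show ?thesis unfolding vf2_def dd[abs_def] by (simp add: sums_iff)
qed



definition is_sol :: "complex \<Rightarrow> nat \<Rightarrow> (complex \<Rightarrow> complex) \<Rightarrow> bool" where
  "is_sol A k u \<longleftrightarrow> u holomorphic_on UNIV \<and> u 0 = -1 \<and> deriv u 0 = 0 \<and>
      (\<forall>z. deriv (deriv u) z - 2 * deriv u z + (1 - A * z ^ (k - 1)) * u z = 0)"

fun gc :: "complex \<Rightarrow> nat \<Rightarrow> nat \<Rightarrow> complex" where
  "gc A k 0 = -1"
| "gc A k (Suc 0) = 0"
| "gc A k (Suc (Suc n)) = (2 * of_nat (Suc n) * gc A k (Suc n) - gc A k n
      + (if k \<le> Suc n then A * gc A k (Suc n - k) else 0)) / (of_nat (Suc (Suc n)) * of_nat (Suc n))"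

lemma sol_fps:
  assumes k: "k \<ge> 1" and s: "is_sol A k u"
  shows "fps_expansion u 0 = Abs_fps (gc A k)"
proof -
  define F where "F = fps_expansion u 0"
  have hol: "u holomorphic_on UNIV" and u0: "u 0 = -1" and u1: "deriv u 0 = 0"
    and ode: "\<And>z. deriv (deriv u) z - 2 * deriv u z + (1 - A * z ^ (k - 1)) * u z = 0"
    using s unfolding is_sol_def by auto
  have uF: "u has_fps_expansion F" unfolding F_def
    by (rule has_fps_expansion_fps_expansion[OF open_UNIV]) (use hol in auto)
  have "(\<lambda>z. deriv (deriv u) z - 2 * deriv u z + (1 - A * z ^ (k - 1)) * u z) has_fps_expansion
        (fps_deriv (fps_deriv F) - fps_const 2 * fps_deriv F + (1 - fps_const A * fps_X^(k-1)) * F)"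
    by (intro has_fps_expansion_add has_fps_expansion_diff has_fps_expansion_mult
        has_fps_expansion_cmult_left has_fps_expansion_deriv uF has_fps_expansion_1
        has_fps_expansion_fps_X_power)
  moreover have "(\<lambda>z. deriv (deriv u) z - 2 * deriv u z + (1 - A * z ^ (k - 1)) * u z) = (\<lambda>_. 0)"
    using ode by auto
  ultimately have "(\<lambda>_. 0) has_fps_expansion
        (fps_deriv (fps_deriv F) - fps_const 2 * fps_deriv F + (1 - fps_const A * fps_X^(k-1)) * F)"
    by simp
  then have G0: "fps_deriv (fps_deriv F) - fps_const 2 * fps_deriv F + (1 - fps_const A * fps_X^(k-1)) * F = 0"
    using fps_expansion_unique_complex has_fps_expansion_0 by blast
  have rec: "F $ Suc (Suc n) = (2 * of_nat (Suc n) * F $ Suc n - F $ n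
      + (if k \<le> Suc n then A * F $ (Suc n - k) else 0)) / (of_nat (Suc (Suc n)) * of_nat (Suc n))" for n
  proof -
    have "(fps_deriv (fps_deriv F) - fps_const 2 * fps_deriv F + (F - fps_const A * (fps_X^(k-1) * F))) $ n = 0"
      using G0 by (simp add: algebra_simps)
    then have e: "of_nat (Suc n) * (of_nat (Suc (Suc n)) * F $ Suc (Suc n)) - 2 * (of_nat (Suc n) * F $ Suc n) + (F $ n - A * (if n < k - 1 then 0 else F $ (n - (k-1)))) = 0"
      by (simp add: fps_X_power_mult_nth split: if_splits)
    have D: "(of_nat (Suc (Suc n)) * of_nat (Suc n) :: complex) \<noteq> 0"
      by (metis mult_eq_0_iff of_nat_eq_0_iff nat.distinct(1))
    have "F $ Suc (Suc n) * (of_nat (Suc (Suc n)) * of_nat (Suc n)) =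
        2 * of_nat (Suc n) * F $ Suc n - F $ n + (if k \<le> Suc n then A * F $ (Suc n - k) else 0)"
    proof (cases "k \<le> Suc n")
      case True
      then have "\<not> n < k - 1" "n - (k-1) = Suc n - k" using k by auto
      with e show ?thesis using True by (simp add: algebra_simps)
    next
      case False
      then have "n < k - 1" using k by auto
      with e show ?thesis using False by (simp add: algebra_simps)
    qed
    then show ?thesis using D by (simp add: eq_divide_eq)
  qed
  have "F $ n = gc A k n" for n
  proof (induction n rule: less_induct)
    case (less n)
    show ?case
    proof (cases n)
      case 0 then show ?thesis using u0 by (simp add: F_def fps_expansion_def)
    next
      case (Suc m)
      show ?thesis
      proof (cases m)
        case 0 then show ?thesis using u1 Suc by (simp add: F_def fps_expansion_def)
      next
        case (Suc j)
        then show ?thesis using \<open>n = Suc m\<close> rec[of j] less.IH by simp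
      qed
    qed
  qed
  then show ?thesis unfolding F_def[symmetric] by (simp add: fps_eq_iff)
qed

lemma sol_unique:
  assumes k: "k \<ge> 1" and s1: "is_sol A k u1" and s2: "is_sol A k u2"
  shows "u1 = u2"
proof
  fix z
  have h1: "u1 holomorphic_on eball 0 \<infinity>" and h2: "u2 holomorphic_on eball 0 \<infinity>"
    using s1 s2 by (auto simp: is_sol_def)
  have "u1 z = eval_fps (fps_expansion u1 0) z"
    using eval_fps_expansion'[OF h1, of z] by simp
  also have "\<dots> = eval_fps (fps_expansion u2 0) z"
    using sol_fps[OF k s1] sol_fps[OF k s2] by simp
  also have "\<dots> = u2 z"
    using eval_fps_expansion'[OF h2, of z] by simp
  finally show "u1 z = u2 z" .
qed



definition uf :: "real \<Rightarrow> nat \<Rightarrow> complex \<Rightarrow> complex" where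
  "uf a k z = exp z * vf a k z"

lemma uf_has_deriv: "(uf a k has_field_derivative exp z * (vf a k z + vf1 a k z)) (at z)"
proof -
  have "((\<lambda>z. exp z * vf a k z) has_field_derivative exp z * vf a k z + exp z * vf1 a k z) (at z)"
    by (auto intro!: derivative_eq_intros vf_deriv simp: algebra_simps)
  then show ?thesis unfolding uf_def[abs_def] by (simp add: algebra_simps)
qed

lemma deriv_uf: "deriv (uf a k) = (\<lambda>z. exp z * (vf a k z + vf1 a k z))"
  by (rule ext, rule DERIV_imp_deriv, rule uf_has_deriv)

lemma uf1_has_deriv: "((\<lambda>z. exp z * (vf a k z + vf1 a k z)) has_field_derivative
     exp z * (vf a k z + 2 * vf1 a k z + vf2 a k z)) (at z)"
proof -
  have "((\<lambda>z. exp z * (vf a k z + vf1 a k z)) has_field_derivative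
     exp z * (vf a k z + vf1 a k z) + exp z * (vf1 a k z + vf2 a k z)) (at z)"
    by (auto intro!: derivative_eq_intros vf_deriv vf1_deriv)
  then show ?thesis by (simp add: algebra_simps)
qed

lemma deriv_deriv_uf: "deriv (deriv (uf a k)) = (\<lambda>z. exp z * (vf a k z + 2 * vf1 a k z + vf2 a k z))"
  unfolding deriv_uf by (rule ext, rule DERIV_imp_deriv, rule uf1_has_deriv)

lemma vf_0: "vf a k 0 = -1"
  unfolding vf_def by (simp add: cc_def)

lemma vf1_0: "vf1 a k 0 = 1"
  unfolding vf1_def by (simp add: cc_def diffs_def)

lemma uf_holo: "uf a k holomorphic_on UNIV"
  using uf_has_deriv by (auto simp: holomorphic_on_open)

lemma uf_is_sol:
  assumes k: "k \<ge> 1"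
  shows "is_sol (of_real a) k (uf a k)"
  unfolding is_sol_def
proof (intro conjI allI)
  show "uf a k holomorphic_on UNIV" by (rule uf_holo)
  show "uf a k 0 = -1" by (simp add: uf_def vf_0)
  show "deriv (uf a k) 0 = 0" by (simp add: deriv_uf vf_0 vf1_0)
  fix z
  show "deriv (deriv (uf a k)) z - 2 * deriv (uf a k) z + (1 - of_real a * z ^ (k - 1)) * uf a k z = 0"
  proof -
    have e1: "deriv (deriv (uf a k)) z = exp z * (vf a k z + 2 * vf1 a k z + vf2 a k z)"
      by (simp only: deriv_deriv_uf)
    have e2: "deriv (uf a k) z = exp z * (vf a k z + vf1 a k z)"
      by (simp only: deriv_uf)
    show ?thesis unfolding e1 e2 uf_def vf2_eq[OF k] by (simp add: algebra_simps)
  qed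
qed

lemma u_sol_eq:
  assumes k: "nodes t \<ge> 1"
  shows "u_sol t = uf (wt t * real (nodes t)) (nodes t)"
proof -
  let ?A = "of_real (wt t) * of_nat (nodes t) :: complex"
  have A: "?A = of_real (wt t * real (nodes t))" by simp
  have S: "is_sol ?A (nodes t) (uf (wt t * real (nodes t)) (nodes t))"
    using uf_is_sol[OF k, of "wt t * real (nodes t)"] by simp
  show ?thesis
    unfolding u_sol_def
  proof (rule the_equality)
    show "uf (wt t * real (nodes t)) (nodes t) holomorphic_on UNIV \<and> uf (wt t * real (nodes t)) (nodes t) 0 = -1 \<and>
      deriv (uf (wt t * real (nodes t)) (nodes t)) 0 = 0 \<and>
      (\<forall>z. deriv (deriv (uf (wt t * real (nodes t)) (nodes t))) z - 2 * deriv (uf (wt t * real (nodes t)) (nodes t)) z +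
           (1 - ?A * z ^ (nodes t - 1)) * uf (wt t * real (nodes t)) (nodes t) z = 0)"
      using S unfolding is_sol_def by blast
  next
    fix u assume "u holomorphic_on UNIV \<and> u 0 = -1 \<and> deriv u 0 = 0 \<and>
      (\<forall>z. deriv (deriv u) z - 2 * deriv u z + (1 - ?A * z ^ (nodes t - 1)) * u z = 0)"
    then have "is_sol ?A (nodes t) u" unfolding is_sol_def by blast
    then show "u = uf (wt t * real (nodes t)) (nodes t)" using sol_unique[OF k _ S] by blast
  qed
qed



lemma bc_small:
  assumes "2 \<le> n" "n \<le> k" shows "bc a k n = 0"
proof -
  have e: "n = Suc (Suc (n-2))" using assms(1) by simp
  show ?thesis using assms by (subst e) simp
qed

lemma bc_shift:
  assumes k: "k \<ge> 1"
  shows "bc a k (n + k + 1) = a * bc a k n / (real (n + k + 1) * real (n + k))"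
proof -
  have e: "n + k + 1 = Suc (Suc (n + k - 1))" using k by simp
  have "Suc (n + k - 1) - k = n" using k by simp
  moreover have "k \<le> Suc (n + k - 1)" using k by simp
  moreover have "real (n + k - 1 + 2) = real (n + k + 1)" "real (n + k - 1 + 1) = real (n + k)" using k by simp_all
  ultimately show ?thesis unfolding e by (simp only: bc.simps if_True)
qed

lemma init_sum:
  assumes "2 \<le> j" "j \<le> k + 1"
  shows "(\<Sum>i<j. \<bar>bc a k i\<bar> * R^i) = 1 + R"
  using assms
proof (induction j)
  case 0 then show ?case by simp
next
  case (Suc j)
  show ?case
  proof (cases "j = 1")
    case True then show ?thesis by (simp add: numeral_2_eq_2)
  next
    case False
    then have "2 \<le> j" "j \<le> k + 1" using Suc.prems by auto
    then show ?thesis using Suc.IH bc_small[of j k a] Suc.prems by simp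
  qed
qed

definition rhoq :: "real \<Rightarrow> nat \<Rightarrow> real \<Rightarrow> real" where
  "rhoq a k R = a * R^(k+1) / (real (k+1) * real k)"

lemma S_bound:
  assumes k: "k \<ge> 1" and a: "a \<ge> 0" and R: "R \<ge> 0" and rho: "rhoq a k R < 1"
  shows "(\<Sum>n. \<bar>bc a k n\<bar> * R^n) \<le> (1 + R) / (1 - rhoq a k R)"
proof -
  define s where "s n = \<bar>bc a k n\<bar> * R^n" for n
  define \<rho> where "\<rho> = rhoq a k R"
  have sm: "summable s" unfolding s_def by (rule bc_summable[OF R])
  have s0: "s n \<ge> 0" for n using R unfolding s_def by simp
  have \<rho>0: "\<rho> \<ge> 0" using a R unfolding \<rho>_def rhoq_def by simp
  have shift: "s (n + (k+1)) \<le> \<rho> * s n" for n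
  proof -
    have "s (n + (k+1)) = a * R^(k+1) / (real (n + k + 1) * real (n + k)) * s n"
      unfolding s_def using bc_shift[OF k, of a n] a
      by (simp add: abs_mult abs_divide power_add field_simps)
    also have "\<dots> \<le> \<rho> * s n"
    proof (rule mult_right_mono)
      have "real (k+1) * real k \<le> real (n + k + 1) * real (n + k)"
        by (intro mult_mono) auto
      moreover have "real (k+1) * real k > 0" using k by simp
      ultimately show "a * R^(k+1) / (real (n + k + 1) * real (n + k)) \<le> \<rho>"
        unfolding \<rho>_def rhoq_def using a R
        by (intro divide_left_mono) auto
    qed (rule s0)
    finally show ?thesis .
  qed
  have sm2: "summable (\<lambda>n. s (n + (k+1)))" using sm by (rule summable_ignore_initial_segment)
  have "suminf s = (\<Sum>n. s (n + (k+1))) + (\<Sum>i<k+1. s i)"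
    by (rule suminf_split_initial_segment[OF sm])
  also have "(\<Sum>i<k+1. s i) = 1 + R" unfolding s_def by (rule init_sum) (use k in auto)
  also have "(\<Sum>n. s (n + (k+1))) \<le> (\<Sum>n. \<rho> * s n)"
    by (rule suminf_le) (use shift sm2 sm in \<open>auto intro: summable_mult\<close>)
  also have "(\<Sum>n. \<rho> * s n) = \<rho> * suminf s" by (rule suminf_mult[OF sm])
  finally have "suminf s \<le> \<rho> * suminf s + (1 + R)" by simp
  then have "suminf s * (1 - \<rho>) \<le> 1 + R" by (simp add: algebra_simps)
  then show ?thesis using rho unfolding s_def[symmetric] \<rho>_def[symmetric]
    by (simp add: pos_le_divide_eq)
qed

lemma E_bound:
  assumes k: "k \<ge> 1" and a: "a \<ge> 0" and R: "R \<ge> 0" and rho: "rhoq a k R < 1"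
    and z: "norm z \<le> R"
  shows "norm (vf a k z - (z - 1)) \<le> (1 + R) / (1 - rhoq a k R) - (1 + R)"
proof -
  define f where "f n = cc a k n * z^n" for n
  define s where "s n = \<bar>bc a k n\<bar> * R^n" for n
  have sm: "summable s" unfolding s_def by (rule bc_summable[OF R])
  have "f sums vf a k z" unfolding f_def vf_def by (intro summable_sums cc_summable)
  then have "(\<lambda>i. f (i + 2)) sums (vf a k z - (\<Sum>i<2. f i))"
    by (subst sums_iff_shift) simp
  moreover have "(\<Sum>i<2. f i) = z - 1" by (simp add: f_def cc_def numeral_2_eq_2)
  ultimately have fs: "(\<lambda>i. f (i + 2)) sums (vf a k z - (z - 1))" by simp
  have nb0: "norm (f n) \<le> s n" for n
    unfolding f_def s_def cc_def using z
    by (simp add: norm_mult norm_power mult_left_mono power_mono)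
  have nb: "norm (f (i+2)) \<le> s (i+2)" for i by (rule nb0)
  have sm2: "summable (\<lambda>i. s (i+2))" using sm by (rule summable_ignore_initial_segment)
  have smn: "summable (\<lambda>i. norm (f (i+2)))"
    by (rule summable_comparison_test'[OF sm2, where N=0]) (use nb in simp)
  have "norm (vf a k z - (z - 1)) = norm (\<Sum>i. f (i+2))" using fs by (simp add: sums_iff)
  also have "\<dots> \<le> (\<Sum>i. norm (f (i+2)))" by (rule summable_norm[OF smn])
  also have "\<dots> \<le> (\<Sum>i. s (i+2))" by (rule suminf_le[OF nb smn sm2])
  also have "(\<Sum>i. s (i+2)) = suminf s - (1 + R)"
    using suminf_split_initial_segment[OF sm, of 2] by (simp add: s_def numeral_2_eq_2)
  also have "suminf s \<le> (1 + R) / (1 - rhoq a k R)" unfolding s_def by (rule S_bound[OF k a R rho])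
  finally show ?thesis by simp
qed

lemma vf_real: "vf a k (of_real x) = of_real (\<Sum>n. bc a k n * x^n)"
proof -
  have "summable (\<lambda>n. bc a k n * x^n)"
    by (rule summable_norm_cancel) (use bc_summable[of "\<bar>x\<bar>" a k] in \<open>simp add: abs_mult power_abs\<close>)
  then have "(\<lambda>n. complex_of_real (bc a k n * x^n)) sums of_real (\<Sum>n. bc a k n * x^n)"
    by (subst sums_of_real_iff) (rule summable_sums)
  then show ?thesis unfolding vf_def cc_def by (simp add: sums_iff)
qed

lemma vf_cont: "continuous_on S (vf a k)"
  using vf_deriv by (metis DERIV_isCont continuous_at_imp_continuous_on)



lemma vf_cont_intro [continuous_intros]:
  "continuous_on S g \<Longrightarrow> continuous_on S (\<lambda>x. vf a k (g x))"
  by (rule continuous_on_compose2[OF vf_cont[of UNIV]]) auto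

lemma zero_analysis:
  assumes k: "k \<ge> 1" and a: "a \<ge> 0" and R1: "R > 1" and R2: "R \<le> 2"
    and rho: "rhoq a k R < 1"
    and eps: "(1 + R) / (1 - rhoq a k R) - (1 + R) < (R - 1) / 2"
  shows "\<exists>x0. 0 < x0 \<and> x0 < R \<and> vf a k (of_real x0) = 0 \<and>
           (\<forall>z. norm z \<le> R \<longrightarrow> vf a k z = 0 \<longrightarrow> z = of_real x0)"
proof -
  define \<epsilon> where "\<epsilon> = (1 + R) / (1 - rhoq a k R) - (1 + R)"
  define r where "r = (R - 1) / 2"
  have r0: "r > 0" unfolding r_def using R1 by simp
  have er: "\<epsilon> < r" using eps unfolding \<epsilon>_def r_def .
  have \<rho>0: "rhoq a k R \<ge> 0" using a R1 unfolding rhoq_def by simp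
  have e0: "\<epsilon> \<ge> 0"
  proof -
    have "(1 + R) \<le> (1 + R) / (1 - rhoq a k R)"
      using rho \<rho>0 R1 by (simp add: le_divide_eq)
    then show ?thesis unfolding \<epsilon>_def by simp
  qed
  have Eb: "norm (vf a k z - (z - 1)) \<le> \<epsilon>" if "norm z \<le> R" for z
    unfolding \<epsilon>_def by (rule E_bound[OF k a _ rho that]) (use R1 in simp)
  define E where "E z = vf a k z - (z - 1)" for z
  have Ed: "(E has_field_derivative (vf1 a k z - 1)) (at z)" for z
    unfolding E_def[abs_def] by (auto intro!: derivative_eq_intros vf_deriv)
  have Eholo: "E holomorphic_on UNIV" using Ed by (auto simp: holomorphic_on_open)
  have dE: "deriv E z = vf1 a k z - 1" for z using Ed by (rule DERIV_imp_deriv)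
  have d1: "norm (vf1 a k \<xi> - 1) \<le> \<epsilon> / r" if "\<xi> \<in> cball 1 \<epsilon>" for \<xi>
  proof -
    have "norm ((deriv ^^ 1) E \<xi>) \<le> fact 1 * \<epsilon> / r ^ 1"
    proof (rule Cauchy_inequality)
      show "E holomorphic_on ball \<xi> r" using Eholo by (rule holomorphic_on_subset) auto
      show "continuous_on (cball \<xi> r) E"
        using Eholo holomorphic_on_imp_continuous_on continuous_on_subset by blast
      show "0 < r" by (rule r0)
      fix x assume x: "norm (\<xi> - x) = r"
      have "norm \<xi> \<le> norm (1::complex) + norm (\<xi> - 1)" by (rule norm_triangle_sub)
      then have "norm \<xi> \<le> 1 + \<epsilon>" using that by (simp add: dist_norm norm_minus_commute)
      moreover have "norm x \<le> norm \<xi> + norm (\<xi> - x)"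
        by (metis norm_triangle_sub norm_minus_commute)
      then have "norm x \<le> norm \<xi> + r" using x by simp
      moreover have "R = 1 + 2 * r" unfolding r_def by (simp add: field_simps)
      ultimately have "norm x \<le> R" using er by linarith
      then show "norm (E x) \<le> \<epsilon>" unfolding E_def by (rule Eb)
    qed
    then show ?thesis using dE by simp
  qed
  have lip: "norm (E z1 - E z2) \<le> (\<epsilon> / r) * norm (z1 - z2)"
    if "z1 \<in> cball 1 \<epsilon>" "z2 \<in> cball 1 \<epsilon>" for z1 z2
    by (rule field_differentiable_bound[OF convex_cball, where f' = "\<lambda>z. vf1 a k z - 1"])
       (use that d1 Ed in \<open>auto intro: has_field_derivative_at_within\<close>)
  have L1: "\<epsilon> / r < 1" using er r0 by simp
  have zero_near: "z \<in> cball 1 \<epsilon>" if "norm z \<le> R" "vf a k z = 0" for z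
    using Eb[OF that(1)] that(2) by (simp add: dist_norm norm_minus_commute)
  have uniq: "z1 = z2" if "norm z1 \<le> R" "vf a k z1 = 0" "norm z2 \<le> R" "vf a k z2 = 0" for z1 z2
  proof (rule ccontr)
    assume ne: "z1 \<noteq> z2"
    have "E z1 - E z2 = z2 - z1" unfolding E_def using that by simp
    then have "norm (z1 - z2) \<le> (\<epsilon> / r) * norm (z1 - z2)"
      using lip[OF zero_near[OF that(1,2)] zero_near[OF that(3,4)]] by (simp add: norm_minus_commute)
    moreover have "(\<epsilon> / r) * norm (z1 - z2) < 1 * norm (z1 - z2)"
      by (rule mult_strict_right_mono[OF L1]) (use ne in simp)
    ultimately show False by linarith
  qed
  define \<phi> where "\<phi> x = Re (vf a k (of_real x))" for x
  have vr: "vf a k (of_real x) = of_real (\<phi> x)" for x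
    unfolding \<phi>_def vf_real by simp
  have \<phi>b: "\<bar>\<phi> x - (x - 1)\<bar> \<le> \<epsilon>" if "\<bar>x\<bar> \<le> R" for x
  proof -
    have "norm (vf a k (of_real x) - (of_real x - 1)) \<le> \<epsilon>" using Eb that by simp
    moreover have e: "vf a k (of_real x) - (of_real x - 1) = complex_of_real (\<phi> x - (x - 1))" using vr by simp
    ultimately have "norm (complex_of_real (\<phi> x - (x - 1))) \<le> \<epsilon>" by (simp only: e)
    then show ?thesis by (simp only: norm_of_real)
  qed
  have eR: "2 * \<epsilon> < R - 1" using er unfolding r_def by (simp add: field_simps)
  have lo: "\<phi> (1 - 2*\<epsilon>) \<le> 0" using \<phi>b[of "1 - 2*\<epsilon>"] e0 eR R2 by (simp add: abs_le_iff)
  have hi: "0 \<le> \<phi> (1 + 2*\<epsilon>)" using \<phi>b[of "1 + 2*\<epsilon>"] e0 eR by (simp add: abs_le_iff)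
  have cont: "continuous_on {1 - 2*\<epsilon> .. 1 + 2*\<epsilon>} \<phi>"
    unfolding \<phi>_def by (intro continuous_intros)
  obtain x0 where x0: "1 - 2*\<epsilon> \<le> x0" "x0 \<le> 1 + 2*\<epsilon>" "\<phi> x0 = 0"
    using IVT'[of \<phi> "1 - 2*\<epsilon>" 0 "1 + 2*\<epsilon>", OF lo hi _ cont] e0 by auto
  have x0pos: "0 < x0" using x0 eR R2 by simp
  have x0R: "x0 < R" using x0 eR by simp
  have vx0: "vf a k (of_real x0) = 0" using vr x0 by simp
  show ?thesis
  proof (intro exI conjI allI impI)
    show "0 < x0" "x0 < R" "vf a k (of_real x0) = 0" by fact+
    fix z assume "norm z \<le> R" "vf a k z = 0"
    then show "z = of_real x0" using uniq[of z "of_real x0"] vx0 x0pos x0R by simp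
  qed
qed



lemma positions_prefix: "p @ [b] \<in> positions t \<Longrightarrow> p \<in> positions t"
proof (induction t arbitrary: p)
  case Leaf then show ?case by simp
next
  case (Node l r)
  show ?case
  proof (cases p)
    case Nil then show ?thesis by simp
  next
    case (Cons x q)
    then show ?thesis using Node by (cases x) auto
  qed
qed

lemma finite_positions: "finite (positions t)"
  by (induction t) auto

lemma root_pos: "nodes t \<ge> 1 \<Longrightarrow> [] \<in> positions t"
  by (cases t) auto

lemma incr_props:
  assumes "f \<in> incr_labelings t"
  shows "bij_betw f (positions t) {1..nodes t}" "\<And>p. p \<notin> positions t \<Longrightarrow> f p = 0"
    "\<And>p b. p @ [b] \<in> positions t \<Longrightarrow> f p < f (p @ [b])"
  using assms unfolding incr_labelings_def by auto

lemma root_min: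
  assumes f: "f \<in> incr_labelings t" and p: "p \<in> positions t"
  shows "f [] \<le> f p"
  using p
proof (induction p rule: rev_induct)
  case Nil then show ?case by simp
next
  case (snoc b q)
  have "q \<in> positions t" using snoc.prems by (rule positions_prefix)
  then have "f [] \<le> f q" by (rule snoc.IH)
  also have "f q < f (q @ [b])" using incr_props(3)[OF f snoc.prems] .
  finally show ?case by simp
qed

lemma root_label:
  assumes f: "f \<in> incr_labelings t" and k: "nodes t \<ge> 1"
  shows "f [] = 1"
proof -
  have bij: "bij_betw f (positions t) {1..nodes t}" by (rule incr_props(1)[OF f])
  have r: "[] \<in> positions t" using k by (rule root_pos)
  have "1 \<in> f ` positions t" using bij k unfolding bij_betw_def by auto
  then obtain p where "p \<in> positions t" "f p = 1" by auto
  then have "f [] \<le> 1" using root_min[OF f] by fastforce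
  moreover have "f [] \<in> {1..nodes t}" using bij r unfolding bij_betw_def by auto
  ultimately show ?thesis by simp
qed

lemma second_label:
  assumes f: "f \<in> incr_labelings t" and k: "nodes t \<ge> 2"
  shows "\<exists>b. f [b] = 2"
proof -
  have bij: "bij_betw f (positions t) {1..nodes t}" by (rule incr_props(1)[OF f])
  have r: "[] \<in> positions t" using k by (intro root_pos) simp
  have f1: "f [] = 1" using root_label[OF f] k by simp
  have "2 \<in> f ` positions t" using bij k unfolding bij_betw_def by auto
  then obtain p where p: "p \<in> positions t" "f p = 2" by auto
  have "p \<noteq> []" using p f1 by auto
  then obtain q b where qb: "p = q @ [b]" by (metis rev_exhaust)
  have q: "q \<in> positions t" using p qb positions_prefix by blast
  have "f q < 2" using incr_props(3)[OF f, of q b] p qb by simp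
  moreover have "f q \<ge> 1" using root_min[OF f q] f1 by simp
  ultimately have "f q = f []" using f1 by simp
  then have "q = []" using bij q r unfolding bij_betw_def inj_on_def by blast
  then show ?thesis using p qb by auto
qed

lemma card_Lb:
  assumes k: "nodes t \<ge> 2"
  shows "finite {f \<in> incr_labelings t. f [b] = 2} \<and> card {f \<in> incr_labelings t. f [b] = 2} \<le> fact (nodes t - 2)"
proof -
  define P where "P = positions t"
  define Q where "Q = P - {[], [b]}"
  define L where "L = {f \<in> incr_labelings t. f [b] = 2}"
  have "finite Q" unfolding Q_def P_def using finite_positions by simp
  then obtain xs where xs: "set xs = Q" "distinct xs" using finite_distinct_list by blast
  have r: "[] \<in> P" using k unfolding P_def by (intro root_pos) simp
  have inj: "inj_on (\<lambda>f. map f xs) L"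
  proof (rule inj_onI)
    fix f g assume fL: "f \<in> L" and gL: "g \<in> L" and eq: "map f xs = map g xs"
    have fi: "f \<in> incr_labelings t" and gi: "g \<in> incr_labelings t" and f2: "f [b] = 2" and g2: "g [b] = 2"
      using fL gL unfolding L_def by auto
    have f1: "f [] = 1" and g1: "g [] = 1" using root_label fi gi k by auto
    show "f = g"
    proof
      fix p
      show "f p = g p"
      proof (cases "p \<in> P")
        case False then show ?thesis using incr_props(2)[OF fi] incr_props(2)[OF gi] unfolding P_def by simp
      next
        case True
        show ?thesis
        proof (cases "p = [] \<or> p = [b]")
          case True then show ?thesis using f1 g1 f2 g2 by auto
        next
          case False
          then have "p \<in> set xs" using True xs unfolding Q_def by auto
          then show ?thesis using eq by (simp add: map_eq_conv)
        qed
      qed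
    qed
  qed
  have img: "(\<lambda>f. map f xs) ` L \<subseteq> permutations_of_set {3..nodes t}"
  proof
    fix ys assume "ys \<in> (\<lambda>f. map f xs) ` L"
    then obtain f where fL: "f \<in> L" and ys: "ys = map f xs" by auto
    have fi: "f \<in> incr_labelings t" and f2: "f [b] = 2" using fL unfolding L_def by auto
    have f1: "f [] = 1" using root_label fi k by auto
    have bij: "bij_betw f P {1..nodes t}" using incr_props(1)[OF fi] unfolding P_def .
    have bP: "[b] \<in> P" using incr_props(2)[OF fi, of "[b]"] f2 unfolding P_def by auto
    have injf: "inj_on f P" using bij unfolding bij_betw_def by auto
    have "f ` Q = f ` P - f ` {[], [b]}"
      unfolding Q_def by (rule inj_on_image_set_diff[OF injf]) (use r bP in auto)
    also have "\<dots> = {1..nodes t} - {1, 2}" using bij f1 f2 unfolding bij_betw_def by auto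
    also have "\<dots> = {3..nodes t}" by auto
    finally have "set ys = {3..nodes t}" using ys xs by simp
    moreover have "distinct ys" unfolding ys using xs injf
      by (simp add: distinct_map Q_def inj_on_subset)
    ultimately show "ys \<in> permutations_of_set {3..nodes t}" by (simp add: permutations_of_set_def)
  qed
  have fin: "finite L" by (rule inj_on_finite[OF inj img]) simp
  have "card L \<le> card (permutations_of_set {3..nodes t})"
    by (rule card_inj_on_le[OF inj img]) simp
  also have "\<dots> = fact (nodes t - 2)" by simp
  finally show ?thesis using fin unfolding L_def by simp
qed

lemma ell_bound:
  assumes k: "nodes t \<ge> 2"
  shows "ell t \<le> 2 * fact (nodes t - 2)"
proof -
  have sub: "incr_labelings t \<subseteq> {f \<in> incr_labelings t. f [False] = 2} \<union> {f \<in> incr_labelings t. f [True] = 2}"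
  proof
    fix f assume f: "f \<in> incr_labelings t"
    obtain b where "f [b] = 2" using second_label[OF f k] by blast
    then show "f \<in> {f \<in> incr_labelings t. f [False] = 2} \<union> {f \<in> incr_labelings t. f [True] = 2}"
      using f by (cases b) auto
  qed
  have "ell t \<le> card ({f \<in> incr_labelings t. f [False] = 2} \<union> {f \<in> incr_labelings t. f [True] = 2})"
    unfolding ell_def by (rule card_mono[OF _ sub]) (use card_Lb[OF k] in auto)
  also have "\<dots> \<le> card {f \<in> incr_labelings t. f [False] = 2} + card {f \<in> incr_labelings t. f [True] = 2}"
    by (rule card_Un_le)
  also have "\<dots> \<le> fact (nodes t - 2) + fact (nodes t - 2)"
    using card_Lb[OF k, of False] card_Lb[OF k, of True] by (intro add_mono) auto
  finally show ?thesis by simp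
qed



lemma ln_le_half: fixes x :: real assumes "x > 0" shows "ln x \<le> x / 2"
proof -
  have "ln (sqrt x) \<le> sqrt x - 1" using assms by (intro ln_le_minus_one) simp
  then have "ln x \<le> 2 * sqrt x - 2" using ln_sqrt[of x] assms by simp
  moreover have "2 * sqrt x - 2 \<le> x / 2"
  proof -
    have "0 \<le> (sqrt x - 2)^2" by simp
    also have "(sqrt x - 2)^2 = x - 4 * sqrt x + 4" using assms by (simp add: power2_eq_square algebra_simps)
    finally show ?thesis by simp
  qed
  ultimately show ?thesis by linarith
qed

lemma aux2: "(X::real) \<noteq> 0 \<Longrightarrow> Y \<noteq> 0 \<Longrightarrow> kr \<noteq> 0 \<Longrightarrow> D \<noteq> 0 \<Longrightarrow>
   (2 / X) * (2 * (kr^2 / D)) / (Y * kr) = (4 * kr) / (X * Y * D)"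
  by (simp add: field_simps power2_eq_square)

lemma numeric:
  fixes k :: nat and d w :: real
  assumes d0: "0 < d" and d1: "d \<le> 1" and k4: "k \<ge> 4" and kd: "real k powr d \<ge> 96"
    and w0: "0 \<le> w" and w1: "w \<le> 2 / (real k * (real k - 1))"
  defines "R \<equiv> 1 + (2 - d) * ln (real k) / real k"
  shows "1 < R" "R \<le> 2" "rhoq (w * real k) k R < 1"
    "(1 + R) / (1 - rhoq (w * real k) k R) - (1 + R) < (R - 1) / 2"
proof -
  define kr where "kr = real k"
  define L where "L = ln kr"
  define D where "D = kr powr d"
  define a where "a = w * kr"
  define \<rho> where "\<rho> = rhoq (w * real k) k R"
  have kr4: "kr \<ge> 4" using k4 unfolding kr_def by simp
  have L43: "L \<ge> 4/3"
  proof -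
    have "ln (4::real) = ln 2 + ln 2" using ln_mult[of 2 2] by simp
    then have "ln (4::real) \<ge> 4/3" using ln2_ge_two_thirds by simp
    moreover have "ln 4 \<le> L" unfolding L_def using kr4 by simp
    ultimately show ?thesis by simp
  qed
  have D96: "D \<ge> 96" using kd unfolding D_def kr_def .
  have Rdef: "R = 1 + (2 - d) * L / kr" unfolding R_def L_def kr_def ..
  have t0: "(2 - d) * L / kr > 0" using d1 L43 kr4 by simp
  show R1: "1 < R" using t0 Rdef by simp
  have Lh: "L \<le> kr / 2" unfolding L_def by (rule ln_le_half) (use kr4 in simp)
  have "(2 - d) * L / kr \<le> 2 * L / kr" using d0 L43 kr4 by (intro divide_right_mono mult_right_mono) auto
  also have "\<dots> \<le> 1" using Lh kr4 by (simp add: divide_le_eq)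
  finally show R2: "R \<le> 2" using Rdef by simp
  have Rk: "R^k \<le> kr powr (2 - d)"
  proof -
    have "R^k = exp (real k * ln R)" using R1 by (simp add: exp_of_nat_mult)
    also have "\<dots> \<le> exp (real k * (R - 1))"
      using R1 ln_le_minus_one[of R] by (intro exp_le_cancel_iff[THEN iffD2] mult_left_mono) auto
    also have "real k * (R - 1) = (2 - d) * L" using Rdef kr4 unfolding kr_def by simp
    also have "exp ((2 - d) * L) = kr powr (2 - d)" unfolding L_def using kr4 by (simp add: powr_def)
    finally show ?thesis .
  qed
  have p2: "kr powr 2 = kr^2" using powr_realpow[of kr 2] kr4 by simp
  have P: "kr powr (2 - d) = kr^2 / D"
    unfolding D_def using kr4 by (simp only: powr_diff p2)
  have Dpos: "D > 0" using D96 by simp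
  have Rk1: "R^(k+1) \<le> 2 * (kr^2 / D)"
  proof -
    have "R^(k+1) = R * R^k" by simp
    also have "\<dots> \<le> 2 * (kr^2 / D)" using R1 R2 Rk P by (intro mult_mono) auto
    finally show ?thesis .
  qed
  have a1: "a \<le> 2 / (kr - 1)"
  proof -
    have "a \<le> 2 / (kr * (kr - 1)) * kr" unfolding a_def kr_def using w1 k4 by (intro mult_right_mono) auto
    also have "\<dots> = 2 / (kr - 1)" using kr4 by simp
    finally show ?thesis .
  qed
  have a0: "a \<ge> 0" unfolding a_def using w0 kr4 by simp
  have \<rho>def: "\<rho> = a * R^(k+1) / ((kr + 1) * kr)" unfolding \<rho>_def rhoq_def a_def kr_def by simp
  have "\<rho> \<le> (2 / (kr - 1)) * (2 * (kr^2 / D)) / ((kr + 1) * kr)"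
    unfolding \<rho>def using a1 a0 Rk1 kr4 R1 by (intro divide_right_mono mult_mono) auto
  also have "\<dots> = (4 * kr) / ((kr - 1) * (kr + 1) * D)"
  proof -
    have "kr - 1 \<noteq> 0" "kr + 1 \<noteq> 0" "kr \<noteq> 0" "D \<noteq> 0" using kr4 Dpos by auto
    then show ?thesis by (rule aux2)
  qed
  also have "\<dots> \<le> (4 * kr) / (kr^2 * D / 2)"
  proof (rule frac_le)
    show "0 \<le> 4 * kr" using kr4 by simp
    show "0 < kr^2 * D / 2" using kr4 Dpos by simp
    have sq: "kr * kr \<ge> 4 * 4" using kr4 by (intro mult_mono) auto
    have "kr^2 / 2 \<le> (kr - 1) * (kr + 1)" using sq by (simp add: algebra_simps power2_eq_square field_simps)
    then show "kr^2 * D / 2 \<le> (kr - 1) * (kr + 1) * D" using Dpos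
      by (metis mult_right_mono less_imp_le times_divide_eq_left)
  qed simp
  also have "\<dots> = 8 / (kr * D)" using kr4 Dpos by (simp add: field_simps power2_eq_square)
  finally have \<rho>b: "\<rho> \<le> 8 / (kr * D)" .
  have "8 / (kr * D) \<le> 8 / (4 * 96)" using kr4 D96 by (intro divide_left_mono mult_mono) auto
  then have \<rho>h: "\<rho> \<le> 1/2" using \<rho>b by simp
  then show "rhoq (w * real k) k R < 1" unfolding \<rho>_def by simp
  have \<rho>0: "\<rho> \<ge> 0" unfolding \<rho>def using a0 R1 kr4 by simp
  have "(1 + R) / (1 - \<rho>) - (1 + R) = (1 + R) * \<rho> / (1 - \<rho>)" using \<rho>h by (simp add: field_simps)
  also have "\<dots> \<le> 3 * \<rho> / (1/2)" using R2 R1 \<rho>h \<rho>0 by (intro frac_le mult_mono) auto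
  also have "\<dots> \<le> 48 / (kr * D)" using \<rho>b by simp
  also have "\<dots> < L / (2 * kr)"
  proof -
    have "96 < D * L"
    proof -
      have "96 * 1 < D * L" using D96 L43 by (intro mult_le_less_imp_less) auto
      then show ?thesis by simp
    qed
    then show ?thesis using kr4 Dpos by (simp add: field_simps)
  qed
  also have "\<dots> \<le> (R - 1) / 2"
  proof -
    have "L \<le> (2 - d) * L" using d1 L43 by simp
    then show ?thesis using Rdef kr4 by (simp add: field_simps)
  qed
  finally show "(1 + R) / (1 - rhoq (w * real k) k R) - (1 + R) < (R - 1) / 2" unfolding \<rho>_def .
qed



lemma wt_bounds:
  assumes k: "nodes t \<ge> 2"
  shows "0 \<le> wt t" "wt t \<le> 2 / (real (nodes t) * (real (nodes t) - 1))"
proof -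
  show "0 \<le> wt t" unfolding wt_def by simp
  obtain m where m: "nodes t = Suc (Suc m)" using k by (metis add_2_eq_Suc le_Suc_ex)
  have fk: "(fact (nodes t) :: real) = real (nodes t) * (real (nodes t) - 1) * fact m"
    unfolding m by (simp add: algebra_simps)
  have e: "real (ell t) \<le> 2 * fact m"
  proof -
    have "ell t \<le> 2 * fact m" using ell_bound[OF k] m by simp
    then have "real (ell t) \<le> real (2 * fact m)" by (rule of_nat_mono)
    then show ?thesis by simp
  qed
  have pos: "real (nodes t) * (real (nodes t) - 1) > 0" using k by simp
  have fm: "(fact m :: real) > 0" by simp
  have "wt t = real (ell t) / (real (nodes t) * (real (nodes t) - 1) * fact m)"
    unfolding wt_def fk ..
  also have "\<dots> \<le> 2 * fact m / (real (nodes t) * (real (nodes t) - 1) * fact m)"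
    using e pos fm by (intro divide_right_mono) auto
  also have "\<dots> = 2 / (real (nodes t) * (real (nodes t) - 1))" using fm by simp
  finally show "wt t \<le> 2 / (real (nodes t) * (real (nodes t) - 1))" .
qed

theorem lemma3p4:
  fixes \<delta> :: real
  assumes "\<delta> > 0"
  shows "\<exists>K. \<forall>t. nodes t \<ge> K \<longrightarrow>
           (\<forall>z. rho_tilde t < norm z \<and>
                 norm z < 1 + (2 - \<delta>) * ln (real (nodes t)) / real (nodes t)
                 \<longrightarrow> S_fun t analytic_on {z})"
proof -
  define d where "d = min \<delta> 1"
  have d0: "0 < d" and d1: "d \<le> 1" and dd: "d \<le> \<delta>" using assms unfolding d_def by auto
  define K where "K = max 4 (nat \<lceil>96 powr (1 / d)\<rceil>)"
  show ?thesis
  proof (intro exI allI impI)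
    fix t and z :: complex
    assume kK: "K \<le> nodes t"
    assume zz: "rho_tilde t < norm z \<and> norm z < 1 + (2 - \<delta>) * ln (real (nodes t)) / real (nodes t)"
    define k where "k = nodes t"
    define kr where "kr = real k"
    have k4: "k \<ge> 4" using kK unfolding K_def k_def by simp
    have kd: "real k powr d \<ge> 96"
    proof -
      have "96 powr (1 / d) \<le> real (nat \<lceil>96 powr (1 / d)\<rceil>)" by linarith
      also have "\<dots> \<le> real k"
      proof -
        have "nat \<lceil>96 powr (1 / d)\<rceil> \<le> k" using kK unfolding K_def k_def by simp
        then show ?thesis by (rule of_nat_mono)
      qed
      finally have "(96 powr (1 / d)) powr d \<le> real k powr d"
        using d0 by (intro powr_mono2) auto
      moreover have "(96 powr (1 / d)) powr d = 96" using d0 by (simp add: powr_powr)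
      ultimately show ?thesis by simp
    qed
    have k2: "nodes t \<ge> 2" using k4 unfolding k_def by simp
    have w0: "0 \<le> wt t" and w1: "wt t \<le> 2 / (real k * (real k - 1))"
      using wt_bounds[OF k2] unfolding k_def by auto
    define R where "R = 1 + (2 - d) * ln (real k) / real k"
    note num = numeric[OF d0 d1 k4 kd w0 w1, folded R_def]
    define a where "a = wt t * real k"
    have a0: "a \<ge> 0" unfolding a_def using w0 by simp
    have k1: "k \<ge> 1" using k4 by simp
    obtain x0 where x0: "0 < x0" "x0 < R" "vf a k (of_real x0) = 0"
        and uniq: "\<And>z. norm z \<le> R \<Longrightarrow> vf a k z = 0 \<Longrightarrow> z = of_real x0"
      using zero_analysis[OF k1 a0 num(1) num(2)] num(3,4) unfolding a_def by blast
    have us: "u_sol t = uf a k" unfolding a_def k_def by (rule u_sol_eq) (use k1 k_def in simp)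
    have uz: "u_sol t w = 0 \<longleftrightarrow> vf a k w = 0" for w unfolding us uf_def by simp
    have rt: "rho_tilde t = x0"
      unfolding rho_tilde_def
    proof (rule cInf_eq_minimum)
      show "x0 \<in> {x. 0 < x \<and> u_sol t (complex_of_real x) = 0}" using x0 uz by simp
      fix x assume "x \<in> {x. 0 < x \<and> u_sol t (complex_of_real x) = 0}"
      then have x: "0 < x" "vf a k (of_real x) = 0" using uz by auto
      show "x0 \<le> x"
      proof (cases "x \<le> R")
        case True
        then have "complex_of_real x = of_real x0" using uniq[of "of_real x"] x by simp
        then show ?thesis by simp
      next
        case False then show ?thesis using x0 by simp
      qed
    qed
    have zR: "norm z \<le> R"
    proof -
      have "ln (real k) / real k \<ge> 0" using k4 by simp
      then have "(2 - \<delta>) * (ln (real k) / real k) \<le> (2 - d) * (ln (real k) / real k)"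
        using dd by (intro mult_right_mono) auto
      then show ?thesis using zz unfolding R_def k_def by simp
    qed
    have unz: "u_sol t z \<noteq> 0"
    proof
      assume "u_sol t z = 0"
      then have "z = of_real x0" using uniq zR uz by blast
      then show False using zz rt x0 by simp
    qed
    have hol: "u_sol t holomorphic_on UNIV" unfolding us by (rule uf_holo)
    have an1: "u_sol t analytic_on {z}"
      using hol analytic_on_open[of UNIV] analytic_on_subset by blast
    have an2: "(\<lambda>w. - deriv (u_sol t) w) analytic_on {z}"
    proof -
      have "deriv (u_sol t) holomorphic_on UNIV" by (rule holomorphic_deriv[OF hol open_UNIV])
      then have "(\<lambda>w. - deriv (u_sol t) w) holomorphic_on UNIV" by (rule holomorphic_on_minus)
      then show ?thesis using analytic_on_open[of UNIV] analytic_on_subset by blast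
    qed
    have "(\<lambda>w. - deriv (u_sol t) w / u_sol t w) analytic_on {z}"
      by (rule analytic_on_divide[OF an2 an1]) (use unz in simp)
    moreover have "S_fun t = (\<lambda>w. - deriv (u_sol t) w / u_sol t w)"
      by (rule ext) (simp add: S_fun_def)
    ultimately show "S_fun t analytic_on {z}" by simp
  qed
qed

end
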